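(* Let $c_{\mathrm{TX}}>0$, $\phi>0$, $\theta=\phi/c_{\mathrm{TX}}$, $B\geq1$ an integer, $0<\lambda\leq\lambda_{\mathrm{th}}=\frac{1}{(1+\sqrt{\theta})^2}$, and $$v_{\mathrm{th}}(\lambda,0)=\sqrt{\lambda\theta}+\frac{\lambda}{2}+\sqrt{\lambda}\sqrt{\sqrt{\lambda\theta}+\frac{\lambda}{4}}.$$ For $V_k\in(0,1]$, let $(t^{(MP)}(V_k),S_M^{(MP)}(V_k))$ be the myopic policy in the zero-ambient-noise case, i.e. a (possibly randomized among minimizers) minimizer over $t\in\{0,1,\dots,B\}$, $S_M\geq 0$ of $$\frac{V_k}{1+V_ktS_M}+\lambda t(1+\theta S_M).$$ Then: (i) if $V_k>v_{\mathrm{th}}(\lambda,0)$, then $t^{(MP)}(V_k)=1$ and $S_M^{(MP)}(V_k)=\frac{1}{\sqrt{\lambda\theta}}-\frac{1}{V_k}$; (ii) if $V_k<v_{\mathrm{th}}(\lambda,0)$, then $t^{(MP)}(V_k)=S_M^{(MP)}(V_k)=0$; (iii) if $V_k=v_{\mathrm{th}}(\lambda,0)$, then $t^{(MP)}(V_k)=1$, $S_M^{(MP)}(V_k)=\frac{1}{\sqrt{\lambda\theta}}-\frac{1}{V_k}$ with probability $p_0$, and $t^{(MP)}(V_k)=0$, $S_M^{(MP)}(V_k)=0$ with probability $1-p_0$, for some $p_0\in[0,1]$.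
   Context: This is the coordinated scheme with infinite ambient SNR ($S_A=\infty$): activating $t$ sensors each with local measurement SNR $S_M$ yields aggregate SNR $tS_M$, and the posterior variance given prior variance $V_k$ is $V_k/(1+V_ktS_M)$. Each active sensor costs $c_{\mathrm{TX}}+\phi S_M$; $\lambda$ is a Lagrange multiplier. *)

theory Defs
  imports Complex_Main
begin

text \<open>Myopic objective (zero ambient noise): posterior variance plus lambda times
  the total sensing cost, with cost per active sensor c_TX + phi S_M, normalised by c_TX,
  so theta = phi / c_TX.\<close>
definition myopic_obj :: "real \<Rightarrow> real \<Rightarrow> real \<Rightarrow> nat \<Rightarrow> real \<Rightarrow> real" where
  "myopic_obj \<theta> lam V t S = V / (1 + V * real t * S) + lam * real t * (1 + \<theta> * S)"

text \<open>Set of all minimizers over t in {0..B}, S_M >= 0. A (possibly randomized)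
  myopic policy picks (according to some distribution) an element of this set.\<close>
definition myopic_minimizers :: "nat \<Rightarrow> real \<Rightarrow> real \<Rightarrow> real \<Rightarrow> (nat \<times> real) set" where
  "myopic_minimizers B \<theta> lam V =
     {(t, S). t \<le> B \<and> S \<ge> 0 \<and>
        (\<forall>t' S'. t' \<le> B \<longrightarrow> S' \<ge> 0 \<longrightarrow> myopic_obj \<theta> lam V t S \<le> myopic_obj \<theta> lam V t' S')}"

definition v_th :: "real \<Rightarrow> real \<Rightarrow> real" where
  "v_th \<theta> lam = sqrt (lam * \<theta>) + lam / 2 + sqrt lam * sqrt (sqrt (lam * \<theta>) + lam / 4)"

end

theory Submission
  imports Defs
begin

lemma key:
  fixes th lam V :: real and B :: nat
  assumes th: "th > 0" and lam: "lam > 0" and V: "V > 0" and B: "B \<ge> 1"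
  defines "s \<equiv> sqrt (lam * th)"
  defines "r \<equiv> sqrt lam * sqrt (s + lam / 4)"
  defines "v \<equiv> s + lam/2 + r"
  defines "w \<equiv> s + lam/2 - r"
  shows "(V > v \<longrightarrow> myopic_minimizers B th lam V = {(1, 1 / s - 1 / V)})
       \<and> (V < v \<longrightarrow> myopic_minimizers B th lam V = {(0, S) | S. S \<ge> 0})
       \<and> (V = v \<longrightarrow> myopic_minimizers B th lam V = insert (1, 1 / s - 1 / V) {(0, S) | S. S \<ge> 0})"
proof -
  define F where "F = myopic_obj th lam V"
  have s0: "s > 0" using th lam by (simp add: s_def)
  have ss: "s^2 = lam * th" using th lam by (simp add: s_def)
  have r0: "r > 0" using s0 lam by (simp add: r_def)
  have rr: "r^2 = lam * s + lam^2/4" using s0 lam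
    by (simp add: r_def power_mult_distrib algebra_simps power2_eq_square)
  have rgt: "r > lam/2"
  proof -
    have "(lam/2)^2 < r^2" using rr s0 lam by (simp add: power_divide)
    thus ?thesis using r0 lam by (smt (verit) power_mono)
  qed
  have vs: "v > s" using rgt lam by (simp add: v_def)
  have ws: "w < s" using rgt by (simp add: w_def)
  have prod: "(V - v) * (V - w) = V^2 - (2*s+lam)*V + s^2"
    unfolding v_def w_def using rr by (simp add: algebra_simps power2_eq_square)
  have F0: "F 0 S = V" for S by (simp add: F_def myopic_obj_def)
  have L1: "F t S > V" if "t \<ge> 1" "S \<ge> 0" "V \<le> s" for t S
  proof -
    define x where "x = real t * S"
    have x0: "x \<ge> 0" using that by (simp add: x_def)
    have u1: "1 + V*x \<ge> 1" using x0 V by simp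
    have "F t S = V/(1+V*x) + lam * real t + s^2 * x"
      by (simp add: F_def myopic_obj_def x_def ss algebra_simps)
    have e: "V/(1+V*x) - V = - V*V*x/(1+V*x)" using u1 by (simp add: field_simps)
    have "V*V*x/(1+V*x) \<le> V*V*x"
      proof -
      have nn: "0 \<le> V*V*x" using x0 V by simp
      have "V*V*x * 1 \<le> V*V*x * (1+V*x)" using u1 nn by (rule mult_left_mono)
      thus ?thesis using u1 by (simp add: divide_le_eq)
    qed
    moreover have "V*V*x \<le> s^2*x" using x0 V that(3)
      by (simp add: mult_right_mono power2_eq_square mult_mono)
    moreover have "lam * real t > 0" using that lam by simp
    ultimately show ?thesis using \<open>F t S = _\<close> e by linarith
  qed
  have L2: "F t S - V = (V - s*(1+V*real t*S))^2/((1+V*real t*S)*V) + lam*(real t - 1)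
             - (V-v)*(V-w)/V" if "t \<ge> 1" "S \<ge> 0" for t S
  proof -
    define u where "u = 1 + V*real t*S"
    have u1: "u \<ge> 1" using that V by (simp add: u_def)
    have a: "F t S = V/u + lam*real t + s^2*(u-1)/V"
      using V by (simp add: F_def myopic_obj_def u_def ss field_simps)
    have "F t S - V = (V - s*u)^2/(u*V) + lam*(real t - 1) - (V^2 - (2*s+lam)*V + s^2)/V"
      unfolding a using u1 V by (simp add: field_simps power2_eq_square)
    thus ?thesis using prod by (simp add: u_def)
  qed
  have Sst: "1 + V*real (1::nat)*(1/s - 1/V) = V/s" using V s0 by (simp add: field_simps)
  have L3: "F 1 (1/s - 1/V) - V = - ((V-v)*(V-w)/V)" if "V \<ge> s"
  proof -
    have "1/s - 1/V \<ge> 0" using that s0 by (simp add: field_simps)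
    from L2[OF _ this, of 1] Sst show ?thesis using s0 by simp
  qed
  have pos: "(V - s*(1+V*real t*S))^2/((1+V*real t*S)*V) \<ge> 0" if "S \<ge> 0" for t S
    using that V by simp
  have eq0: "S = 1/s - 1/V" if "(V - s*(1+V*real t*S))^2/((1+V*real t*S)*V) = 0" "S\<ge>0" "t = 1" for t S
  proof -
    have "1+V*real t*S > 0" using that V by (simp add: add_pos_nonneg)
    hence "V = s*(1+V*S)" using that V by simp
    thus ?thesis using s0 V by (simp add: field_simps)
  qed
  have mem: "(t,S) \<in> myopic_minimizers B th lam V \<longleftrightarrow> t \<le> B \<and> S \<ge> 0 \<and>
      (\<forall>t' S'. t' \<le> B \<longrightarrow> S' \<ge> 0 \<longrightarrow> F t S \<le> F t' S')" for t S
    by (simp add: myopic_minimizers_def F_def)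
  show ?thesis
  proof (intro conjI impI)
    assume Vv: "V > v"
    have Vs: "V \<ge> s" using Vv vs by simp
    have neg: "(V-v)*(V-w)/V > 0" using Vv vs ws V by simp
    have Sge: "1/s - 1/V \<ge> 0" using Vs s0 by (simp add: field_simps)
    have lower: "F t S \<ge> F 1 (1/s - 1/V)" if "S \<ge> 0" for t S
    proof (cases "t = 0")
      case True thus ?thesis using L3[OF Vs] neg F0 by simp
    next
      case False
      hence "t \<ge> 1" by simp
      from L2[OF this that] L3[OF Vs] pos[OF that, of t] show ?thesis using \<open>t \<ge> 1\<close> lam
        by (smt (verit) of_nat_1 of_nat_mono mult_nonneg_nonneg)
    qed
    show "myopic_minimizers B th lam V = {(1, 1 / s - 1 / V)}"
    proof (intro set_eqI iffI)
      fix p :: "nat \<times> real" assume "p \<in> myopic_minimizers B th lam V"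
      then obtain t S where p: "p = (t,S)" and tB: "t \<le> B" and S0: "S \<ge> 0"
        and m: "\<forall>t' S'. t' \<le> B \<longrightarrow> S' \<ge> 0 \<longrightarrow> F t S \<le> F t' S'" using mem by (cases p) blast
      have le: "F t S \<le> F 1 (1/s - 1/V)" using m B Sge by blast
      have t0: "t \<noteq> 0"
      proof
        assume "t = 0"
        hence "F t S = V" using F0 by simp
        thus False using le L3[OF Vs] neg by linarith
      qed
      hence t1: "t \<ge> 1" by simp
      have A: "F t S - V = F 1 (1/s - 1/V) - V + (V - s*(1+V*real t*S))^2/((1+V*real t*S)*V) + lam*(real t - 1)"
        using L2[OF t1 S0] L3[OF Vs] by simp
      have "real t \<ge> 1" using t1 by simp
      hence "lam*(real t - 1) \<ge> 0" using lam by simp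
      hence z1: "(V - s*(1+V*real t*S))^2/((1+V*real t*S)*V) = 0" and z2: "lam*(real t - 1) = 0"
        using A le pos[OF S0, of t] by linarith+
      have "t = 1" using z2 lam by simp
      thus "p \<in> {(1, 1 / s - 1 / V)}" using eq0[OF z1 S0] p by simp
    next
      fix p :: "nat \<times> real" assume "p \<in> {(1, 1 / s - 1 / V)}"
      thus "p \<in> myopic_minimizers B th lam V" using mem B Sge lower by auto
    qed
  next
    assume Vv: "V < v"
    have gt: "F t S > V" if "t \<ge> 1" "S \<ge> 0" for t S
    proof (cases "V \<le> s")
      case True thus ?thesis using L1 that by simp
    next
      case False
      hence "(V-v)*(V-w) < 0" using Vv ws by (intro mult_neg_pos) auto
      hence "(V-v)*(V-w)/V < 0" using V by (simp add: divide_neg_pos)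
      moreover have "real t \<ge> 1" using that by simp
      hence "lam*(real t - 1) \<ge> 0" using lam by simp
      ultimately show ?thesis using L2[OF that] pos[OF that(2), of t] by linarith
    qed
    have lower: "F t S \<ge> V" if "S \<ge> 0" for t S
      using gt[OF _ that, of t] F0 by (cases "t = 0") force+
    show "myopic_minimizers B th lam V = {(0, S) | S. S \<ge> 0}"
    proof (intro set_eqI iffI)
      fix p :: "nat \<times> real" assume "p \<in> myopic_minimizers B th lam V"
      then obtain t S where p: "p = (t,S)" and S0: "S \<ge> 0"
        and m: "\<forall>t' S'. t' \<le> B \<longrightarrow> S' \<ge> 0 \<longrightarrow> F t S \<le> F t' S'" using mem by (cases p) blast
      have "F t S \<le> V" using m F0[of 0] by (metis le0 order_refl)
      hence "t = 0" using gt[OF _ S0, of t] by (cases "t = 0") force+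
      thus "p \<in> {(0, S) | S. S \<ge> 0}" using p S0 by simp
    next
      fix p :: "nat \<times> real" assume "p \<in> {(0, S) | S. S \<ge> 0}"
      thus "p \<in> myopic_minimizers B th lam V" using mem lower F0 by auto
    qed
  next
    assume Vv: "V = v"
    have Vs: "V \<ge> s" using Vv vs by simp
    have zero: "(V-v)*(V-w)/V = 0" using Vv by simp
    have Sge: "1/s - 1/V \<ge> 0" using Vs s0 by (simp add: field_simps)
    have F1: "F 1 (1/s - 1/V) = V" using L3[OF Vs] zero by simp
    have lower: "F t S \<ge> V" if "S \<ge> 0" for t S
    proof (cases "t = 0")
      case True thus ?thesis using F0 by simp
    next
      case False
      hence t1: "t \<ge> 1" by simp
      hence "real t \<ge> 1" by simp
      hence "lam*(real t - 1) \<ge> 0" using lam by simp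
      thus ?thesis using L2[OF t1 that] pos[OF that, of t] zero by linarith
    qed
    show "myopic_minimizers B th lam V = insert (1, 1 / s - 1 / V) {(0, S) | S. S \<ge> 0}"
    proof (intro set_eqI iffI)
      fix p :: "nat \<times> real" assume "p \<in> myopic_minimizers B th lam V"
      then obtain t S where p: "p = (t,S)" and S0: "S \<ge> 0"
        and m: "\<forall>t' S'. t' \<le> B \<longrightarrow> S' \<ge> 0 \<longrightarrow> F t S \<le> F t' S'" using mem by (cases p) blast
      have le: "F t S \<le> V" using m F0[of 0] by (metis le0 order_refl)
      show "p \<in> insert (1, 1 / s - 1 / V) {(0, S) | S. S \<ge> 0}"
      proof (cases "t = 0")
        case True thus ?thesis using p S0 by simp
      next
        case False
        hence t1: "t \<ge> 1" by simp
        hence "real t \<ge> 1" by simp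
        hence "lam*(real t - 1) \<ge> 0" using lam by simp
        hence z1: "(V - s*(1+V*real t*S))^2/((1+V*real t*S)*V) = 0" and z2: "lam*(real t - 1) = 0"
          using L2[OF t1 S0] zero le pos[OF S0, of t] by linarith+
        have "t = 1" using z2 lam by simp
        thus ?thesis using eq0[OF z1 S0] p by simp
      qed
    next
      fix p :: "nat \<times> real" assume "p \<in> insert (1, 1 / s - 1 / V) {(0, S) | S. S \<ge> 0}"
      thus "p \<in> myopic_minimizers B th lam V" using mem lower F0 F1 B Sge by auto
    qed
  qed
qed

theorem corollary1:
  fixes c_TX \<phi> lam V :: real and B :: nat
  assumes "c_TX > 0" and "\<phi> > 0" and "B \<ge> 1"
    and "lam > 0" and "lam \<le> 1 / (1 + sqrt (\<phi> / c_TX))^2"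
    and "0 < V" and "V \<le> 1"
  shows "(V > v_th (\<phi> / c_TX) lam \<longrightarrow>
           myopic_minimizers B (\<phi> / c_TX) lam V
             = {(1, 1 / sqrt (lam * (\<phi> / c_TX)) - 1 / V)})
       \<and> (V < v_th (\<phi> / c_TX) lam \<longrightarrow>
           myopic_minimizers B (\<phi> / c_TX) lam V = {(0, S) | S. S \<ge> 0})
       \<and> (V = v_th (\<phi> / c_TX) lam \<longrightarrow>
           myopic_minimizers B (\<phi> / c_TX) lam V
             = insert (1, 1 / sqrt (lam * (\<phi> / c_TX)) - 1 / V) {(0, S) | S. S \<ge> 0})"
proof -
  have th: "\<phi> / c_TX > 0" using assms by simp
  show ?thesis
    using key[OF th assms(4) assms(6) assms(3)] unfolding v_th_def by (simp add: algebra_simps)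
qed

end
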